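(* For all integers $n\ge1$ and $d\ge0$, in $K[t]$: $$\tau^n(b_d(t))=l_d^{q^{n-1}}\sum_{d\ge i_1\ge i_2\ge\cdots\ge i_n\ge0}l_{i_1}^{q^{n-2}-q^{n-1}}l_{i_2}^{q^{n-3}-q^{n-2}}\cdots l_{i_{n-1}}^{1-q}\,l_{i_n}^{-1}\,b_{i_n}(t),$$ and consequently $$\sum_{a\in A^+(d)}\frac{a(t)}{a^{q^n}}=l_d^{q^{n-1}-q^n}\sum_{d\ge i_1\ge\cdots\ge i_n\ge0}l_{i_1}^{q^{n-2}-q^{n-1}}\cdots l_{i_{n-1}}^{1-q}\,l_{i_n}^{-1}\,b_{i_n}(t).$$ (For $n=1$ the product of powers of $l_{i_1},\ldots,l_{i_{n-1}}$ is empty and the summand is $l_{i_1}^{-1}b_{i_1}(t)$.)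
   Context: $A=\mathbb{F}_q[\theta]$, $K=\mathbb{F}_q(\theta)$, $A^+(d)$ the monic polynomials of degree $d$; $t$ an indeterminate and $a(t)$ is $a$ with $\theta$ replaced by $t$. $l_0=1$, $l_i=(\theta-\theta^{q^i})l_{i-1}$; $b_0(t)=1$, $b_i(t)=\prod_{k=0}^{i-1}(t-\theta^{q^k})$. $\tau$ is the $\mathbb{F}_q[t]$-linear ring endomorphism of $K[t]$ with $\tau(c)=c^q$ for $c\in K$. *)

theory Defs
  imports "HOL-Computational_Algebra.Polynomial_Factorial" "HOL-Library.FuncSet" "HOL-Library.Cardinality"
begin

text \<open>F_q is a finite field type 'a, q = CARD('a); A = 'a poly; K = 'a poly fract;
  K[t] = 'a poly fract poly.\<close>

definition theta :: "'a::{finite,field} poly fract" where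
  "theta = to_fract [:0, 1:]"

definition lfac :: "nat \<Rightarrow> 'a::{finite,field} poly fract" where
  "lfac i = (\<Prod>k\<in>{1..i}. theta - theta ^ (CARD('a) ^ k))"

definition bpoly :: "nat \<Rightarrow> 'a::{finite,field} poly fract poly" where
  "bpoly i = (\<Prod>k<i. [: - (theta ^ (CARD('a) ^ k)), 1 :])"

definition tau :: "'a::{finite,field} poly fract poly \<Rightarrow> 'a poly fract poly" where
  "tau p = map_poly (\<lambda>c. c ^ CARD('a)) p"

definition monic_deg :: "nat \<Rightarrow> 'a::{finite,field} poly set" where
  "monic_deg d = {a. lead_coeff a = 1 \<and> degree a = d}"

text \<open>a(t): a with theta replaced by t, as an element of K[t]\<close>
definition at_t :: "'a::{finite,field} poly \<Rightarrow> 'a poly fract poly" where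
  "at_t a = map_poly (\<lambda>c. to_fract [:c:]) a"

definition chains :: "nat \<Rightarrow> nat \<Rightarrow> (nat \<Rightarrow> nat) set" where
  "chains n d = {i \<in> {1..n} \<rightarrow>\<^sub>E {0..d}. \<forall>j\<in>{1..<n}. i (Suc j) \<le> i j}"

definition chain_sum :: "nat \<Rightarrow> nat \<Rightarrow> 'a::{finite,field} poly fract poly" where
  "chain_sum n d = (\<Sum>i\<in>chains n d.
     smult ((\<Prod>j\<in>{1..<n}. (lfac (i j) :: 'a poly fract) powi
               (int (CARD('a) ^ (n - 1 - j)) - int (CARD('a) ^ (n - j))))
            * (lfac (i n)) powi (-1))
       (bpoly (i n)))"

end

theory Submission
  imports Defs
begin

lemma card_ge2: "CARD('a::{finite,field}) \<ge> 2"
proof -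
  have "{0,1} \<subseteq> (UNIV::'a set)" by auto
  hence "card {0::'a,1} \<le> CARD('a)" by (intro card_mono) auto
  thus ?thesis by simp
qed

lemma ff_pow: fixes x :: "'a::{finite,field}" shows "x ^ CARD('a) = x"
proof (cases "x = 0")
  case False
  have "x * (\<Prod>y\<in>UNIV-{0}. x * y) = x * x ^ (card (UNIV :: 'a set) - 1) * \<Prod>(UNIV-{0})"
    by (simp add: prod.distrib mult_ac)
  also have "x * x ^ (card (UNIV :: 'a set) - 1) = x ^ Suc (card (UNIV :: 'a set) - 1)"
    by (subst power_Suc) auto
  also have "Suc (card (UNIV :: 'a set) - 1) = card (UNIV :: 'a set)"
    using finite_UNIV_card_ge_0[where ?'a = 'a] by simp
  also have "(\<Prod>y\<in>UNIV-{0}. x * y) = (\<Prod>y\<in>UNIV-{0}. y)"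
    by (rule prod.reindex_bij_witness[of _ "\<lambda>y. y / x" "\<lambda>y. x * y"]) (use False in auto)
  finally show ?thesis
    by simp
qed (use finite_UNIV_card_ge_0[where ?'a = 'a] in auto)

lemma binom_card_zero:
  assumes "0 < k" "k < CARD('a::{finite,field})"
  shows "(of_nat (CARD('a) choose k) :: 'a) = 0"
proof -
  define q where "q = CARD('a)"
  define P :: "'a poly" where "P = [:1,1:] ^ q - monom 1 q - 1"
  have q2: "q \<ge> 2" using card_ge2 q_def by simp
  have cP: "coeff P k = of_nat (q choose k)" using assms unfolding P_def q_def
    by (simp add: coeff_linear_poly_power coeff_monom)
  have "P = 0"
  proof (rule poly_eqI_degree[of UNIV])
    fix x :: 'a
    have "poly P x = (x+1)^q - x^q - 1" by (simp add: P_def poly_monom add.commute)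
    also have "\<dots> = 0" unfolding q_def by (simp add: ff_pow)
    finally show "poly P x = poly 0 x" by simp
  next
    have "degree P < q"
    proof (rule degree_lessI)
      show "P \<noteq> 0 \<or> q > 0" using q2 by simp
      show "\<forall>j\<ge>q. coeff P j = 0"
      proof (intro allI impI)
        fix j assume "j \<ge> q"
        show "coeff P j = 0"
        proof (cases "j = q")
          case True thus ?thesis unfolding P_def using q2 by (simp add: coeff_linear_poly_power coeff_monom)
        next
          case False
          have "degree ([:1,1:] ^ q :: 'a poly) \<le> q" 
            using degree_linear_power[of "1::'a" q] by simp
          hence "coeff ([:1,1:] ^ q :: 'a poly) j = 0" using False \<open>j \<ge> q\<close> by (intro coeff_eq_0) auto
          thus ?thesis unfolding P_def using False \<open>j \<ge> q\<close> by (simp add: coeff_monom)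
        qed
      qed
    qed
    thus "card (UNIV::'a set) > degree P" unfolding q_def by simp
  qed auto
  with cP show ?thesis unfolding q_def by simp
qed

type_synonym 'a K = "'a poly fract"

lemma to_fract_of_nat: "(of_nat n :: 'b::idom fract) = to_fract (of_nat n)"
  by (induction n) auto

lemma to_fract_power: "to_fract (x ^ n) = to_fract x ^ n"
  by (induction n) auto

lemma to_fract_prod: "to_fract (prod f A) = (\<Prod>x\<in>A. to_fract (f x))"
  by (induction A rule: infinite_finite_induct) auto

lemma binom_card_zero_K:
  assumes "0 < k" "k < CARD('a::{finite,field})"
  shows "(of_nat (CARD('a) choose k) :: 'a K) = 0"
  using binom_card_zero[OF assms] by (simp add: to_fract_of_nat of_nat_poly)

lemma frob_add: fixes x y :: "'a::{finite,field} K"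
  shows "(x + y) ^ CARD('a) = x ^ CARD('a) + y ^ CARD('a)"
proof -
  define q where "q = CARD('a)"
  have q2: "q \<ge> 2" using card_ge2 q_def by simp
  have "(x + y) ^ q = (\<Sum>k\<le>q. of_nat (q choose k) * x ^ k * y ^ (q - k))"
    by (rule binomial_ring)
  also have "\<dots> = (\<Sum>k\<in>{0,q}. of_nat (q choose k) * x ^ k * y ^ (q - k))"
  proof (intro sum.mono_neutral_right ballI)
    fix k assume "k \<in> {..q} - {0, q}"
    hence "0 < k" "k < q" by auto
    thus "of_nat (q choose k) * x ^ k * y ^ (q - k) = 0"
      using binom_card_zero_K[of k, where 'a='a] q_def by simp
  qed auto
  finally show ?thesis using q2 unfolding q_def[symmetric] by (simp add: add.commute)
qed

lemma frob_uminus: fixes x :: "'a::{finite,field} K"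
  shows "(- x) ^ CARD('a) = - (x ^ CARD('a))"
proof -
  have "x ^ CARD('a) + (-x) ^ CARD('a) = 0"
    by (metis frob_add add.right_inverse card_ge2 power_0_left not_numeral_le_zero)
  thus ?thesis by (simp add: eq_neg_iff_add_eq_0 add.commute)
qed

definition frobn :: "nat \<Rightarrow> 'a::{finite,field} K \<Rightarrow> 'a K" where
  "frobn n x = x ^ (CARD('a) ^ n)"

lemma frobn_add: "frobn n (x + y) = frobn n x + frobn n y"
  unfolding frobn_def
proof (induction n)
  case (Suc n)
  have "(x + y) ^ (CARD('a) ^ Suc n) = ((x + y) ^ (CARD('a) ^ n)) ^ CARD('a)"
    by (metis power_Suc2 power_mult)
  also have "\<dots> = (x ^ (CARD('a) ^ n)) ^ CARD('a) + (y ^ (CARD('a) ^ n)) ^ CARD('a)"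
    by (simp add: Suc frob_add)
  finally show ?case by (metis power_Suc2 power_mult)
qed simp

lemma frobn_mult: "frobn n (x * y) = frobn n x * frobn n y"
  unfolding frobn_def by (simp add: power_mult_distrib)

lemma frobn_0 [simp]: "frobn n 0 = 0" and frobn_1 [simp]: "frobn n 1 = 1"
  unfolding frobn_def by simp_all

lemma frobn_uminus: "frobn n (- x) = - frobn n x"
  using frobn_add[of n x "-x"] by (simp add: eq_neg_iff_add_eq_0 add.commute)

lemma frobn_diff: "frobn n (x - y) = frobn n x - frobn n y"
  using frobn_add[of n x "-y"] by (simp add: frobn_uminus)

lemma frobn_sum: "frobn n (sum f A) = (\<Sum>x\<in>A. frobn n (f x))"
  by (induction A rule: infinite_finite_induct) (auto simp: frobn_add)

lemma frobn_prod: "frobn n (prod f A) = (\<Prod>x\<in>A. frobn n (f x))"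
  by (induction A rule: infinite_finite_induct) (auto simp: frobn_mult)

lemma frobn_power: "frobn n (x ^ k) = frobn n x ^ k"
  unfolding frobn_def by (simp add: power_mult[symmetric] mult.commute)

lemma frobn_inverse: "frobn n (inverse x) = inverse (frobn n x)"
  unfolding frobn_def by (simp add: power_inverse)

lemma frobn_powi: "frobn n (x powi k) = frobn n x powi k"
proof -
  have "(x powi k) ^ (CARD('a) ^ n) = (x powi k) powi (int (CARD('a) ^ n))"
    by (rule power_int_of_nat[symmetric])
  also have "\<dots> = x powi (k * int (CARD('a) ^ n))" by (rule power_int_mult[symmetric])
  also have "\<dots> = x powi (int (CARD('a) ^ n) * k)" by (simp only: mult.commute)
  also have "\<dots> = (x ^ (CARD('a) ^ n)) powi k" by (rule power_int_power[symmetric])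
  finally show ?thesis unfolding frobn_def .
qed

lemma const_poly_power: "[:c:] ^ n = [:c ^ n:]"
  by (induction n) (auto simp: mult.commute)

lemma frobn_const: "frobn n (to_fract [:c:]) = to_fract [:c:]"
  unfolding frobn_def
proof (induction n)
  case (Suc n)
  have "to_fract [:c:] ^ CARD('a) ^ Suc n = (to_fract [:c:] ^ CARD('a) ^ n) ^ CARD('a)"
    by (metis power_Suc2 power_mult)
  also have "\<dots> = to_fract [:c:] ^ CARD('a)" by (simp only: Suc)
  also have "\<dots> = to_fract [:c ^ CARD('a):]" by (simp only: to_fract_power[symmetric] const_poly_power)
  finally show ?case by (simp add: ff_pow)
qed simp

lemma frobn_Suc: "frobn (Suc n) (x::'a::{finite,field} K) = frobn n (x ^ CARD('a))"
  unfolding frobn_def by (metis power_Suc power_mult)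

abbreviation M :: "nat \<Rightarrow> 'a::{finite,field} K poly \<Rightarrow> 'a K poly" where
  "M n p \<equiv> map_poly (frobn n) p"

lemma M_add: "M n (p + q) = M n p + M n q"
  by (intro poly_eqI) (simp add: coeff_map_poly frobn_add)

lemma M_smult: "M n (smult c p) = smult (frobn n c) (M n p)"
  by (rule map_poly_smult) (auto simp: frobn_mult)

lemma M_pCons: "M n (pCons c p) = pCons (frobn n c) (M n p)"
  by (rule map_poly_pCons) simp

lemma M_mult: "M n (p * q) = M n p * M n q"
  by (induction p) (simp_all add: M_add M_smult M_pCons)

lemma M_1 [simp]: "M n 1 = 1"
  by simp

lemma M_sum: "M n (sum f A) = (\<Sum>x\<in>A. M n (f x))"
  by (induction A rule: infinite_finite_induct) (auto simp: M_add)

lemma M_prod: "M n (prod f A) = (\<Prod>x\<in>A. M n (f x))"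
  by (induction A rule: infinite_finite_induct) (auto simp: M_mult)

lemma M_M: "M m (M n p) = M (m + n) p"
proof -
  have "M m (M n p) = map_poly (frobn m \<circ> frobn n) p" by (rule map_poly_map_poly) simp_all
  also have "frobn m \<circ> frobn n = (frobn (m + n) :: 'a K \<Rightarrow> 'a K)"
    by (auto simp: frobn_def fun_eq_iff power_mult[symmetric] power_add mult.commute)
  finally show ?thesis .
qed

lemma tau_M: "tau = (M 1 :: 'a::{finite,field} K poly \<Rightarrow> _)"
proof -
  have "frobn 1 = (\<lambda>c::'a K. c ^ CARD('a))" by (auto simp: frobn_def fun_eq_iff)
  thus ?thesis unfolding tau_def by (intro ext) (simp only:)
qed

lemma tau_pow: "(tau ^^ n) (p :: 'a::{finite,field} K poly) = M n p"
proof (induction n)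
  case 0
  have "frobn 0 = (\<lambda>x::'a K. x)" by (auto simp: frobn_def fun_eq_iff)
  thus ?case by simp
next
  case (Suc n)
  thus ?case by (simp add: tau_M M_M)
qed

lemma theta_pow_inj: "(theta::'a::{finite,field} K) ^ a = theta ^ b \<longleftrightarrow> a = b"
proof
  assume "(theta::'a K) ^ a = theta ^ b"
  hence "([:0,1:] :: 'a poly) ^ a = [:0,1:] ^ b" by (simp add: theta_def flip: to_fract_power)
  hence "degree (([:0,1:] :: 'a poly) ^ a) = degree (([:0,1:] :: 'a poly) ^ b)" by simp
  thus "a = b" by (metis degree_linear_power)
next
  assume "a = b" thus "(theta::'a K) ^ a = theta ^ b" by simp
qed

lemma q_pow_inj: "CARD('a::{finite,field}) ^ a = CARD('a) ^ b \<longleftrightarrow> a = b"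
  using card_ge2[where 'a='a] by (simp add: power_inject_exp)

lemma theta_diff_nz: "k \<ge> 1 \<Longrightarrow> (theta::'a::{finite,field} K) - theta ^ (CARD('a) ^ k) \<noteq> 0"
proof
  assume "k \<ge> 1" "(theta::'a K) - theta ^ (CARD('a) ^ k) = 0"
  hence "(theta::'a K) ^ 1 = theta ^ (CARD('a) ^ k)" by simp
  hence "1 = CARD('a) ^ k" by (simp only: theta_pow_inj)
  hence "CARD('a) ^ 0 = CARD('a) ^ k" by simp
  hence "0 = k" by (simp only: q_pow_inj)
  with \<open>k \<ge> 1\<close> show False by simp
qed

lemma theta_ne: "k \<ge> 1 \<Longrightarrow> (theta::'a::{finite,field} K) \<noteq> theta ^ (CARD('a) ^ k)"
proof
  assume k: "k \<ge> 1" and "(theta::'a K) = theta ^ (CARD('a) ^ k)"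
  hence "(theta::'a K) - theta ^ (CARD('a) ^ k) = 0" by simp
  with theta_diff_nz[OF k, where 'a='a] show False by simp
qed

lemma lfac_nz: "lfac d \<noteq> (0::'a::{finite,field} K)"
proof -
  have "\<forall>k\<in>{1..d}. (theta::'a K) - theta ^ (CARD('a)^k) \<noteq> 0"
    using theta_diff_nz[where 'a='a] by auto
  thus ?thesis unfolding lfac_def by (simp only: prod_zero_iff[OF finite_atLeastAtMost]) blast
qed

lemma lfac_0 [simp]: "lfac 0 = 1"
  by (simp add: lfac_def)

lemma lfac_Suc: "lfac (Suc d) = lfac d * ((theta::'a::{finite,field} K) - theta ^ (CARD('a) ^ Suc d))"
  unfolding lfac_def by (simp add: atLeastAtMostSuc_conv mult.commute)

lemma bpoly_Suc: "bpoly (Suc d) = bpoly d * [:-((theta::'a::{finite,field} K) ^ (CARD('a) ^ d)), 1:]"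
  unfolding bpoly_def by (simp add: mult.commute)

lemma bpoly_0 [simp]: "bpoly 0 = 1"
  by (simp add: bpoly_def)

lemma frobn_theta_pow: "frobn n ((theta::'a::{finite,field} K) ^ (CARD('a) ^ k)) = theta ^ (CARD('a) ^ (n + k))"
  unfolding frobn_def by (simp add: power_mult[symmetric] power_add mult.commute)

lemma M_bpoly: "M n (bpoly d) = (\<Prod>k<d. [:-((theta::'a::{finite,field} K) ^ (CARD('a) ^ (n + k))), 1:])"
  unfolding bpoly_def by (simp add: M_prod M_pCons frobn_uminus frobn_theta_pow)

definition Tsum :: "nat \<Rightarrow> 'a::{finite,field} K poly" where
  "Tsum d = (\<Sum>i\<le>d. smult (inverse (lfac i)) (bpoly i))"

lemma tau_bpoly: "M 1 (bpoly d) = smult (lfac d) (Tsum d :: 'a::{finite,field} K poly)"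
proof (induction d)
  case 0
  thus ?case by (simp add: Tsum_def M_bpoly)
next
  case (Suc d)
  define th where "th = (theta :: 'a K)"
  define Q where "Q = CARD('a)"
  have b1: "bpoly (Suc d) = M 1 (bpoly d) * [:-th,1:]"
    unfolding M_bpoly unfolding bpoly_def th_def Q_def
    by (subst prod.lessThan_Suc_shift) (simp add: mult.commute)
  have e1: "M 1 (bpoly (Suc d)) = M 1 (bpoly d) * [:-(th ^ (Q ^ Suc d)),1:]"
    unfolding M_bpoly th_def Q_def by simp
  have e2: "[:-(th ^ (Q ^ Suc d)),1:] = [:-th,1:] + [:th - th ^ (Q ^ Suc d):]" by simp
  have e3: "M 1 (bpoly d) * ([:-th,1:] + [:th - th ^ (Q ^ Suc d):]) =
     M 1 (bpoly d) * [:-th,1:] + smult (th - th ^ (Q ^ Suc d)) (M 1 (bpoly d))"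
    by (simp add: distrib_left mult.commute smult_diff_left)
  have e4: "smult (th - th ^ (Q ^ Suc d)) (M 1 (bpoly d)) = smult (lfac (Suc d)) (Tsum d)"
    unfolding Suc.IH by (simp add: lfac_Suc th_def Q_def smult_smult mult.commute)
  have e5: "bpoly (Suc d) + smult (lfac (Suc d)) (Tsum d) = smult (lfac (Suc d)) (Tsum (Suc d) :: 'a K poly)"
    by (simp add: Tsum_def smult_add_right lfac_nz)
  have "M 1 (bpoly (Suc d)) = bpoly (Suc d) + smult (lfac (Suc d)) (Tsum d :: 'a K poly)"
    unfolding e1 e2 e3 e4 by (simp add: b1)
  thus ?case using e5 by simp
qed

lemma smult_sum_right: "smult c (sum f A) = (\<Sum>x\<in>A. smult c (f x))"
  by (induction A rule: infinite_finite_induct) (auto simp: smult_add_right)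

lemma chains_finite: "finite (chains n k)"
proof -
  have "chains n k \<subseteq> {1..n} \<rightarrow>\<^sub>E {0..k}" by (auto simp: chains_def)
  thus ?thesis by (rule finite_subset) (intro finite_PiE; simp)
qed

lemma chain_mono:
  assumes "\<forall>j\<in>{1..<N}. i (Suc j) \<le> (i j :: nat)" "1 \<le> a" "a \<le> b" "b \<le> N"
  shows "i b \<le> i a"
  using assms(3,4)
proof (induction b)
  case 0 thus ?case using assms(2) by simp
next
  case (Suc b)
  show ?case
  proof (cases "a = Suc b")
    case False
    hence "a \<le> b" using Suc by simp
    hence "i b \<le> i a" using Suc by simp
    moreover have "i (Suc b) \<le> i b" using assms(1) Suc \<open>a \<le> b\<close> assms(2) by auto
    ultimately show ?thesis by simp
  qed simp
qed

lemma chains_1: "chain_sum 1 d = (Tsum d :: 'a::{finite,field} K poly)"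
  unfolding chain_sum_def Tsum_def
proof (rule sum.reindex_bij_witness[of _ "\<lambda>k. (\<lambda>j. if j = 1 then k else undefined)" "\<lambda>i. i 1"])
  fix i assume "i \<in> chains 1 d"
  thus "(\<lambda>j. if j = 1 then i 1 else undefined) = i"
    by (auto simp: chains_def PiE_def extensional_def fun_eq_iff)
  show "i 1 \<in> {..d}" using \<open>i \<in> chains 1 d\<close> by (auto simp: chains_def PiE_def Pi_def)
  show "smult (inverse (lfac (i 1))) (bpoly (i 1)) =
    smult ((\<Prod>j\<in>{1..<1}. lfac (i j) powi (int (CARD('a) ^ (1 - 1 - j)) - int (CARD('a) ^ (1 - j)))) *
       lfac (i 1) powi - 1) (bpoly (i 1))" by (simp add: power_int_minus)
next
  fix k assume "k \<in> {..d}"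
  thus "(if 1 = 1 then k else undefined) = k" by simp
  show "(\<lambda>j. if j = 1 then k else undefined) \<in> chains 1 d"
    using \<open>k \<in> {..d}\<close> by (auto simp: chains_def PiE_def extensional_def)
qed

lemma chains_Suc:
  assumes "n \<ge> 1"
  shows "chain_sum (Suc n) d = (\<Sum>k\<le>d. smult (lfac k powi (int (CARD('a) ^ (n - 1)) - int (CARD('a) ^ n)))
            (chain_sum n k :: 'a::{finite,field} K poly))"
proof -
  define e where "e = (\<lambda>N j. int (CARD('a) ^ (N - 1 - j)) - int (CARD('a) ^ (N - j)))"
  define f where "f = (\<lambda>N (i::nat\<Rightarrow>nat). smult ((\<Prod>j\<in>{1..<N}. (lfac (i j) :: 'a K) powi e N j)
            * (lfac (i N)) powi (-1)) (bpoly (i N)))"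
  have cs: "chain_sum N k = sum (f N) (chains N k)" for N k
    unfolding chain_sum_def f_def e_def by simp
  have "(\<Sum>k\<le>d. smult (lfac k powi e (Suc n) 1) (chain_sum n k :: 'a K poly))
      = (\<Sum>k\<le>d. \<Sum>c\<in>chains n k. smult (lfac k powi e (Suc n) 1) (f n c))"
    by (simp add: cs smult_sum_right)
  also have "\<dots> = (\<Sum>(k,c)\<in>Sigma {..d} (chains n). smult (lfac k powi e (Suc n) 1) (f n c))"
  proof (rule sum.Sigma)
    show "finite {..d}" by simp
    show "\<forall>k\<in>{..d}. finite (chains n k)"
      by (simp add: chains_finite)
  qed
  also have "\<dots> = sum (f (Suc n)) (chains (Suc n) d)"
  proof (rule sym, rule sum.reindex_bij_witness[of _ 
        "\<lambda>(k,c). (\<lambda>j. if j = 1 then k else if j \<in> {2..Suc n} then c (j - 1) else undefined)"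
        "\<lambda>i. (i 1, \<lambda>j. if j \<in> {1..n} then i (Suc j) else undefined)"])
    fix i assume i: "i \<in> chains (Suc n) d"
    hence iE: "i \<in> {1..Suc n} \<rightarrow>\<^sub>E {0..d}" and imono: "\<forall>j\<in>{1..<Suc n}. i (Suc j) \<le> i j"
      by (auto simp: chains_def)
    show "(case (i 1, \<lambda>j. if j \<in> {1..n} then i (Suc j) else undefined) of
           (k, c) \<Rightarrow> \<lambda>j. if j = 1 then k else if j \<in> {2..Suc n} then c (j - 1) else undefined) = i"
    proof (rule ext)
      fix j show "(case (i 1, \<lambda>j. if j \<in> {1..n} then i (Suc j) else undefined) of
           (k, c) \<Rightarrow> \<lambda>j. if j = 1 then k else if j \<in> {2..Suc n} then c (j - 1) else undefined) j = i j"
        using iE by (cases j) (auto simp: PiE_def extensional_def)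
    qed
    have le1: "i (Suc j) \<le> i 1" if "j \<in> {1..n}" for j
      using chain_mono[OF imono, of 1 "Suc j"] that by auto
    show "(i 1, \<lambda>j. if j \<in> {1..n} then i (Suc j) else undefined) \<in> Sigma {..d} (chains n)"
    proof (simp only: mem_Sigma_iff, intro conjI)
      show "i 1 \<in> {..d}" using iE by (auto simp: PiE_def Pi_def)
      show "(\<lambda>j. if j \<in> {1..n} then i (Suc j) else undefined) \<in> chains n (i 1)"
        unfolding chains_def using le1 imono by auto
    qed
    have pr: "(\<Prod>j\<in>{1..<Suc n}. (lfac (i j) :: 'a K) powi e (Suc n) j)
        = lfac (i 1) powi e (Suc n) 1 * (\<Prod>j\<in>{1..<n}. lfac (i (Suc j)) powi e n j)"
    proof -
      have "(\<Prod>j\<in>{1..<Suc n}. (lfac (i j) :: 'a K) powi e (Suc n) j)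
          = lfac (i 1) powi e (Suc n) 1 * (\<Prod>j\<in>{Suc 1..<Suc n}. lfac (i j) powi e (Suc n) j)"
        using assms by (subst prod.atLeast_Suc_lessThan) auto
      also have "(\<Prod>j\<in>{Suc 1..<Suc n}. (lfac (i j) :: 'a K) powi e (Suc n) j)
          = (\<Prod>j\<in>{1..<n}. lfac (i (Suc j)) powi e (Suc n) (Suc j))"
        by (rule prod.shift_bounds_Suc_ivl)
      also have "\<dots> = (\<Prod>j\<in>{1..<n}. lfac (i (Suc j)) powi e n j)"
        by (intro prod.cong) (auto simp: e_def)
      finally show ?thesis .
    qed
    have ps: "(\<Prod>j\<in>{1..<n}. (lfac ((\<lambda>j. if j \<in> {1..n} then i (Suc j) else undefined) j) :: 'a K) powi e n j)
        = (\<Prod>j\<in>{1..<n}. lfac (i (Suc j)) powi e n j)"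
      by (intro prod.cong) auto
    have fs: "f n (\<lambda>j. if j \<in> {1..n} then i (Suc j) else undefined) =
       smult ((\<Prod>j\<in>{1..<n}. lfac (i (Suc j)) powi e n j) * lfac (i (Suc n)) powi (-1)) (bpoly (i (Suc n)))"
      unfolding f_def using assms by (simp only: ps) simp
    have fS: "f (Suc n) i = smult ((\<Prod>j\<in>{1..<Suc n}. (lfac (i j) :: 'a K) powi e (Suc n) j)
            * (lfac (i (Suc n))) powi (-1)) (bpoly (i (Suc n)))"
      unfolding f_def by (rule refl)
    show "(\<lambda>(k,c). smult (lfac k powi e (Suc n) 1) (f n c)) (i 1, \<lambda>j. if j \<in> {1..n} then i (Suc j) else undefined) = f (Suc n) i"
      unfolding prod.case fs fS pr by (simp only: smult_smult mult.assoc)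
  next
    fix kc assume kc: "kc \<in> Sigma {..d} (chains n)"
    obtain k c where kc_def: "kc = (k, c)" by (cases kc)
    with kc have k: "k \<le> d" and cE: "c \<in> {1..n} \<rightarrow>\<^sub>E {0..k}" and cmono: "\<forall>j\<in>{1..<n}. c (Suc j) \<le> c j"
      by (auto simp: chains_def)
    define i where "i = (\<lambda>j. if j = 1 then k else if j \<in> {2..Suc n} then c (j - 1) else undefined)"
    show "(\<lambda>i. (i 1, \<lambda>j. if j \<in> {1..n} then i (Suc j) else undefined))
       ((\<lambda>(k, c). \<lambda>j. if j = 1 then k else if j \<in> {2..Suc n} then c (j - 1) else undefined) kc) = kc"
      using cE by (auto simp: kc_def PiE_def extensional_def fun_eq_iff)
    have "i \<in> chains (Suc n) d"
      unfolding chains_def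
    proof (intro CollectI conjI ballI)
      have cb: "c (x - 1) \<le> d" if "x \<noteq> 1" "1 \<le> x" "x \<le> Suc n" for x
      proof -
        have "x - 1 \<in> {1..n}" using that by auto
        hence "c (x - 1) \<in> {0..k}" using cE by (auto simp: PiE_def Pi_def)
        thus ?thesis using k by simp
      qed
      show "i \<in> {1..Suc n} \<rightarrow>\<^sub>E {0..d}"
        using k cb by (auto simp: i_def PiE_def Pi_def extensional_def)
      fix j assume j: "j \<in> {1..<Suc n}"
      show "i (Suc j) \<le> i j"
      proof (cases "j = 1")
        case True thus ?thesis using cE assms by (auto simp: i_def PiE_def Pi_def)
      next
        case False
        then obtain j' where "j = Suc j'" "j' \<in> {1..<n}" using j by (cases j) auto
        thus ?thesis using cmono by (auto simp: i_def)
      qed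
    qed
    thus "(\<lambda>(k, c). \<lambda>j. if j = 1 then k else if j \<in> {2..Suc n} then c (j - 1) else undefined) kc
          \<in> chains (Suc n) d" by (simp add: kc_def i_def)
  qed
  finally have X: "(\<Sum>k\<le>d. smult (lfac k powi e (Suc n) 1) (chain_sum n k)) = (chain_sum (Suc n) d :: 'a K poly)"
    by (simp only: cs)
  have E: "e (Suc n) 1 = int (CARD('a) ^ (n - 1)) - int (CARD('a) ^ n)" by (simp add: e_def)
  show ?thesis using X[unfolded E] by (rule sym)
qed

lemma inv_pow_combine:
  fixes l :: "'b::field"
  assumes "l \<noteq> 0"
  shows "inverse l ^ b * l ^ a = l powi (int a - int b)"
proof -
  have "l powi (int a - int b) = l powi int a / l powi int b"
    using assms by (rule power_int_diff[OF disjI1])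
  thus ?thesis by (simp add: power_inverse divide_inverse mult.commute)
qed

lemma part1:
  assumes "n \<ge> 1"
  shows "M n (bpoly d) = smult (lfac d ^ (CARD('a) ^ (n - 1))) (chain_sum n d :: 'a::{finite,field} K poly)"
proof -
  obtain m where n: "n = Suc m" using assms by (cases n) auto
  have "M (Suc m) (bpoly d) = smult (lfac d ^ (CARD('a) ^ m)) (chain_sum (Suc m) d :: 'a K poly)" for d
  proof (induction m arbitrary: d)
    case 0
    have "M 1 (bpoly d) = smult (lfac d) (chain_sum 1 d :: 'a K poly)" by (simp only: tau_bpoly chains_1)
    thus ?case by simp
  next
    case (Suc m)
    have "M (Suc (Suc m)) (bpoly d) = M (Suc m) (M 1 (bpoly d) :: 'a K poly)"
      by (simp add: M_M)
    also have "\<dots> = M (Suc m) (smult (lfac d) (Tsum d))" by (simp only: tau_bpoly)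
    also have "\<dots> = smult (frobn (Suc m) (lfac d))
        (\<Sum>i\<le>d. smult (frobn (Suc m) (inverse (lfac i))) (M (Suc m) (bpoly i)))"
      by (simp add: Tsum_def M_smult M_sum)
    also have "\<dots> = smult (lfac d ^ (CARD('a) ^ Suc m))
        (\<Sum>i\<le>d. smult (lfac i powi (int (CARD('a) ^ m) - int (CARD('a) ^ Suc m))) (chain_sum (Suc m) i))"
    proof -
      have "smult (frobn (Suc m) (inverse (lfac i))) (M (Suc m) (bpoly i)) =
         smult (lfac i powi (int (CARD('a) ^ m) - int (CARD('a) ^ Suc m))) (chain_sum (Suc m) i :: 'a K poly)"
        for i
        unfolding Suc.IH smult_smult frobn_def
        by (subst inv_pow_combine[OF lfac_nz]) (rule refl)
      thus ?thesis by (simp add: frobn_def)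
    qed
    also have "\<dots> = smult (lfac d ^ (CARD('a) ^ Suc m)) (chain_sum (Suc (Suc m)) d)"
      using chains_Suc[of "Suc m" d, where 'a='a] by simp
    finally show ?case .
  qed
  thus ?thesis using n by simp
qed

lemma power_sum_zero:
  fixes V :: "'b::field set"
  assumes fin: "finite V" and z: "0 \<in> V" and cl: "\<And>x y. x \<in> V \<Longrightarrow> y \<in> V \<Longrightarrow> x - y \<in> V"
    and m: "m + 1 < card V"
  shows "(\<Sum>r\<in>V. r ^ m) = 0"
proof -
  define N where "N = card V"
  define \<alpha> where "\<alpha> = (\<Prod>u\<in>V-{0}. u)"
  define Q where "Q = (\<lambda>r. \<Prod>s\<in>V-{r}. [:-s, 1:])"
  define G where "G = (\<Sum>r\<in>V. smult (r ^ m) (Q r)) - smult \<alpha> (monom 1 m)"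
  have degQ: "degree (Q r) = N - 1" if "r \<in> V" for r
  proof -
    have "degree (Q r) = (\<Sum>s\<in>V-{r}. degree [:-s, 1:])"
      unfolding Q_def by (rule degree_prod_sum_eq) auto
    also have "\<dots> = card (V - {r})" by simp
    also have "\<dots> = N - 1" using that fin by (simp add: N_def)
    finally show ?thesis .
  qed
  have lcQ: "coeff (Q r) (N - 1) = 1" if "r \<in> V" for r
  proof -
    have "lead_coeff (Q r) = 1" unfolding Q_def by (simp add: lead_coeff_prod)
    thus ?thesis using degQ[OF that] by simp
  qed
  have polyQ: "poly (Q r) s = (if r = s then \<alpha> else 0)" if "r \<in> V" "s \<in> V" for r s
  proof (cases "r = s")
    case False
    hence "s \<in> V - {r}" using that by auto
    hence "poly (Q r) s = 0" unfolding Q_def poly_prod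
      using fin by (intro prod_zero bexI[of _ s]) auto
    thus ?thesis using False by simp
  next
    case True
    have "poly (Q r) s = (\<Prod>s'\<in>V-{r}. s - s')" unfolding Q_def poly_prod by simp
    also have "\<dots> = \<alpha>" unfolding \<alpha>_def
    proof (rule prod.reindex_bij_witness[of _ "\<lambda>u. s - u" "\<lambda>s'. s - s'"])
      fix s' assume "s' \<in> V - {r}"
      thus "s - (s - s') = s'" by simp
      show "s - s' \<in> V - {0}" using \<open>s' \<in> V - {r}\<close> True that cl by auto
      show "s - s' = s - s'" by simp
    next
      fix u assume "u \<in> V - {0}"
      thus "s - (s - u) = u" by simp
      show "s - u \<in> V - {r}" using \<open>u \<in> V - {0}\<close> True that cl by auto
    qed
    finally show ?thesis using True by simp
  qed
  have "G = 0"
  proof (rule poly_eqI_degree[of V])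
    fix s assume s: "s \<in> V"
    have "poly G s = (\<Sum>r\<in>V. r ^ m * poly (Q r) s) - \<alpha> * s ^ m"
      by (simp add: G_def poly_sum poly_monom)
    also have "(\<Sum>r\<in>V. r ^ m * poly (Q r) s) = (\<Sum>r\<in>V. if r = s then r ^ m * \<alpha> else 0)"
      by (intro sum.cong) (auto simp: polyQ s)
    also have "\<dots> = s ^ m * \<alpha>" using fin s by (simp add: sum.delta')
    finally show "poly G s = poly 0 s" by simp
  next
    have "degree G \<le> N - 1" unfolding G_def
    proof (rule degree_diff_le)
      show "degree (\<Sum>r\<in>V. smult (r ^ m) (Q r)) \<le> N - 1"
        by (rule degree_sum_le[OF fin]) (auto simp: degQ intro: order.trans[OF degree_smult_le])
      show "degree (smult \<alpha> (monom 1 m)) \<le> N - 1"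
        using m by (intro order.trans[OF degree_smult_le]) (simp add: degree_monom_eq N_def)
    qed
    thus "degree G < card V" using m by (simp add: N_def)
  qed (use m in auto)
  hence "coeff G (N - 1) = 0" by simp
  moreover have "coeff G (N - 1) = (\<Sum>r\<in>V. r ^ m * coeff (Q r) (N - 1)) - \<alpha> * coeff (monom 1 m) (N - 1)"
    by (simp add: G_def coeff_sum)
  moreover have "(\<Sum>r\<in>V. r ^ m * coeff (Q r) (N - 1)) = (\<Sum>r\<in>V. r ^ m)"
    using lcQ by (intro sum.cong) (simp_all only: mult_1_right)
  moreover have "coeff (monom (1::'b) m) (N - 1) = 0" using m by (simp add: coeff_monom N_def)
  ultimately show ?thesis by simp
qed

definition Vp :: "nat \<Rightarrow> 'a::{finite,field} poly set" where
  "Vp n = {b. \<forall>i\<ge>n. coeff b i = 0}"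

lemma Vp_0: "Vp 0 = {0}"
  by (auto simp: Vp_def poly_eq_iff)

lemma Vp_Suc: "Vp (Suc n) = (\<lambda>(c,b). pCons c b) ` (UNIV \<times> Vp n)"
proof (intro equalityI subsetI)
  fix b :: "'a poly" assume b: "b \<in> Vp (Suc n)"
  obtain a p where "b = pCons a p" by (cases b)
  moreover have "p \<in> Vp n" using b unfolding Vp_def \<open>b = pCons a p\<close>
    by (auto simp: coeff_pCons split: nat.splits)
  ultimately show "b \<in> (\<lambda>(c,b). pCons c b) ` (UNIV \<times> Vp n)" by auto
next
  fix b :: "'a poly" assume "b \<in> (\<lambda>(c,b). pCons c b) ` (UNIV \<times> Vp n)"
  then obtain a p where "b = pCons a p" "p \<in> Vp n" by auto
  thus "b \<in> Vp (Suc n)" unfolding Vp_def by (auto simp: coeff_pCons split: nat.splits)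
qed

lemma Vp_finite_card: "finite (Vp n :: 'a::{finite,field} poly set) \<and> card (Vp n :: 'a poly set) = CARD('a) ^ n"
proof (induction n)
  case 0 thus ?case by (simp add: Vp_0)
next
  case (Suc n)
  have inj: "inj_on (\<lambda>(c,b). pCons c b) (UNIV \<times> (Vp n :: 'a poly set))"
    by (auto simp: inj_on_def)
  show ?case unfolding Vp_Suc using Suc inj
    by (simp add: card_image card_cartesian_product)
qed

lemma Vp_finite: "finite (Vp n)" and card_Vp: "card (Vp n :: 'a::{finite,field} poly set) = CARD('a) ^ n"
  using Vp_finite_card by auto

lemma Vp_diff: "x \<in> Vp n \<Longrightarrow> y \<in> Vp n \<Longrightarrow> x - y \<in> Vp n"
  by (auto simp: Vp_def)

lemma Vp_zero: "0 \<in> Vp n"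
  by (auto simp: Vp_def)

lemma Vp_smult: "x \<in> Vp n \<Longrightarrow> smult c x \<in> Vp n"
  by (auto simp: Vp_def)

lemma Vp_Suc_degree: "b \<in> Vp (Suc d) \<longleftrightarrow> degree b \<le> d"
proof
  assume "b \<in> Vp (Suc d)"
  thus "degree b \<le> d" unfolding Vp_def by (intro degree_le) auto
next
  assume "degree b \<le> d"
  thus "b \<in> Vp (Suc d)" unfolding Vp_def by (auto intro: coeff_eq_0)
qed

lemma Vp_degree_less: "b \<in> Vp d \<Longrightarrow> b \<noteq> 0 \<Longrightarrow> degree b < d"
  by (cases d) (auto simp: Vp_0 Vp_Suc_degree simp del: Vp_Suc)

lemma monic_deg_sub: "monic_deg d \<subseteq> Vp (Suc d)"
  by (auto simp: monic_deg_def Vp_Suc_degree simp del: Vp_Suc)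

lemma monic_deg_finite: "finite (monic_deg d)"
  using finite_subset[OF monic_deg_sub Vp_finite] .

lemma Vp_iff: "b \<in> Vp d \<longleftrightarrow> (b = 0 \<or> degree b < d)"
proof
  assume "b \<in> Vp d" thus "b = 0 \<or> degree b < d" using Vp_degree_less by blast
next
  assume "b = 0 \<or> degree b < d"
  thus "b \<in> Vp d" unfolding Vp_def using coeff_eq_0 by fastforce
qed

lemma Vp_Suc_split: "Vp (Suc d) - {0} = (Vp d - {0}) \<union> {b. b \<noteq> 0 \<and> degree b = d}"
proof (rule set_eqI)
  fix b :: "'a::{finite,field} poly"
  have "b \<in> Vp (Suc d) - {0} \<longleftrightarrow> b \<noteq> 0 \<and> degree b \<le> d" unfolding Diff_iff Vp_iff by auto
  also have "\<dots> \<longleftrightarrow> (b \<noteq> 0 \<and> degree b < d) \<or> (b \<noteq> 0 \<and> degree b = d)" by (simp only: le_less) blast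
  also have "\<dots> \<longleftrightarrow> b \<in> (Vp d - {0}) \<union> {b. b \<noteq> 0 \<and> degree b = d}" unfolding Un_iff Diff_iff Vp_iff by blast
  finally show "b \<in> Vp (Suc d) - {0} \<longleftrightarrow> b \<in> (Vp d - {0}) \<union> {b. b \<noteq> 0 \<and> degree b = d}" .
qed

lemma deg_eq_image: "{b. b \<noteq> 0 \<and> degree b = d} = (\<lambda>(c,a). smult c a) ` ((UNIV - {0}) \<times> monic_deg d)"
proof (intro equalityI subsetI)
  fix b :: "'a::{finite,field} poly" assume "b \<in> {b. b \<noteq> 0 \<and> degree b = d}"
  hence b: "b \<noteq> 0" "degree b = d" by auto
  define c where "c = lead_coeff b"
  have c: "c \<noteq> 0" unfolding c_def using b(1) by simp
  have "smult (inverse c) b \<in> monic_deg d" using b c by (simp add: monic_deg_def c_def)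
  moreover have "b = smult c (smult (inverse c) b)" using c by simp
  ultimately show "b \<in> (\<lambda>(c,a). smult c a) ` ((UNIV - {0}) \<times> monic_deg d)"
    using c by (intro image_eqI[of _ _ "(c, smult (inverse c) b)"]) auto
next
  fix b :: "'a::{finite,field} poly" assume "b \<in> (\<lambda>(c,a). smult c a) ` ((UNIV - {0}) \<times> monic_deg d)"
  then obtain c a where "b = smult c a" "c \<noteq> 0" "a \<in> monic_deg d" by auto
  thus "b \<in> {b. b \<noteq> 0 \<and> degree b = d}" by (auto simp: monic_deg_def)
qed

lemma deg_eq_inj: "inj_on (\<lambda>(c,a). smult c a) ((UNIV - {0}) \<times> (monic_deg d :: 'a::{finite,field} poly set))"
proof (rule inj_onI)
  fix x y assume x: "x \<in> (UNIV - {0}) \<times> (monic_deg d :: 'a poly set)" and y: "y \<in> (UNIV - {0}) \<times> (monic_deg d :: 'a poly set)"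
    and xy: "(\<lambda>(c,a). smult c a) x = (\<lambda>(c,a). smult c a) y"
  obtain cc a where xe: "x = (cc, a)" by (cases x)
  obtain cc' a' where ye: "y = (cc', a')" by (cases y)
  have "cc \<noteq> 0" "cc' \<noteq> 0" "a \<in> monic_deg d" "a' \<in> monic_deg d" "smult cc a = smult cc' a'"
    using x y xy by (auto simp: xe ye)
  have "lead_coeff a = 1" "lead_coeff a' = 1" using \<open>a \<in> monic_deg d\<close> \<open>a' \<in> monic_deg d\<close>
    unfolding monic_deg_def by blast+
  hence l1: "lead_coeff (smult cc a) = cc" and l2: "lead_coeff (smult cc' a') = cc'"
    by (simp_all only: lead_coeff_smult mult_1_right)
  have "cc = cc'" using l1 l2 \<open>smult cc a = smult cc' a'\<close> by simp
  moreover have "a = smult (inverse cc) (smult cc a)" using \<open>cc \<noteq> 0\<close> by simp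
  moreover have "a' = smult (inverse cc') (smult cc' a')" using \<open>cc' \<noteq> 0\<close> by simp
  ultimately show "x = y" using \<open>smult cc a = smult cc' a'\<close> xe ye by metis
qed

lemma at_t_pCons: "at_t (pCons a p) = pCons (to_fract [:a:]) (at_t p)"
  unfolding at_t_def by (rule map_poly_pCons) simp

lemma coeff_at_t: "coeff (at_t b) i = to_fract [:coeff b i:]"
  unfolding at_t_def by (rule coeff_map_poly) simp

lemma poly_at_t_theta: "poly (at_t b) theta = to_fract (b :: 'a::{finite,field} poly)"
proof (induction b)
  case (pCons a p)
  have e: "pCons a p = [:a:] + [:0,1:] * p" by simp
  have "to_fract (pCons a p) = to_fract [:a:] + theta * to_fract p"
    unfolding theta_def by (metis e to_fract_add to_fract_mult)
  thus ?case by (simp add: at_t_pCons pCons.IH)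
qed (simp add: at_t_def)

lemma M_poly: "frobn k (poly P x) = poly (M k P) (frobn k x)"
  by (induction P) (simp_all add: M_pCons frobn_add frobn_mult)

lemma M_at_t: "M k (at_t b) = at_t (b :: 'a::{finite,field} poly)"
  by (intro poly_eqI) (simp add: coeff_map_poly coeff_at_t frobn_const)

lemma poly_at_t_frob: "poly (at_t b) (theta ^ (CARD('a) ^ k)) = to_fract (b :: 'a::{finite,field} poly) ^ (CARD('a) ^ k)"
proof -
  have "to_fract b ^ (CARD('a) ^ k) = frobn k (poly (at_t b) theta)"
    by (simp add: poly_at_t_theta frobn_def)
  also have "\<dots> = poly (at_t b) (theta ^ (CARD('a) ^ k))"
    by (subst M_poly) (simp only: M_at_t frobn_def)
  finally show ?thesis by simp
qed

lemma at_t_smult: "at_t (smult c a) = smult (to_fract [:c:]) (at_t (a :: 'a::{finite,field} poly))"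
  unfolding at_t_def by (rule map_poly_smult) (simp_all flip: to_fract_mult)

lemma to_fract_smult: "to_fract (smult c a) = to_fract [:c:] * to_fract a"
  by (simp flip: to_fract_mult)

lemma degree_at_t: "degree (at_t b) \<le> degree b"
  unfolding at_t_def by (rule map_poly_degree_leq)

definition w :: "'a::{finite,field} poly \<Rightarrow> 'a K poly" where
  "w b = smult (inverse (to_fract b)) (at_t b)"

definition W :: "nat \<Rightarrow> 'a::{finite,field} K poly" where
  "W n = (\<Sum>b\<in>Vp n - {0}. w b)"

definition S :: "nat \<Rightarrow> 'a::{finite,field} K poly" where
  "S d = (\<Sum>a\<in>monic_deg d. w a)"

lemma w_smult: assumes "c \<noteq> 0" shows "w (smult c a) = w a"
proof -
  have nz: "to_fract [:c:] \<noteq> 0" using assms by simp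
  have "inverse (to_fract [:c:] * to_fract a) * to_fract [:c:] = inverse (to_fract a) * (inverse (to_fract [:c:]) * to_fract [:c:])"
    by (simp only: inverse_mult_distrib ac_simps)
  also have "inverse (to_fract [:c:]) * to_fract [:c:] = 1" using nz by simp
  finally have eq: "inverse (to_fract [:c:] * to_fract a) * to_fract [:c:] = inverse (to_fract a)" by simp
  show ?thesis unfolding w_def at_t_smult to_fract_smult smult_smult eq ..
qed

lemma q_zero_a: "(of_nat CARD('a::{finite,field}) :: 'a) = 0"
proof -
  have "(\<Sum>r\<in>(UNIV::'a set). r ^ 0) = 0"
    using card_ge2[where 'a='a] by (intro power_sum_zero) auto
  thus ?thesis by simp
qed

lemma q_zero_Kpoly: "(of_nat CARD('a::{finite,field}) :: 'a K poly) = 0"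
  by (simp add: of_nat_poly to_fract_of_nat q_zero_a)

lemma W_0: "W 0 = 0"
  by (simp add: W_def Vp_0)

lemma W_Suc: "W (Suc d) = W d - (S d :: 'a::{finite,field} K poly)"
proof -
  have fin1: "finite (Vp d - {0} :: 'a poly set)" using Vp_finite by auto
  have fin2: "finite {b::'a poly. b \<noteq> 0 \<and> degree b = d}"
    by (rule finite_subset[OF _ Vp_finite[of "Suc d"]]) (auto simp: Vp_Suc_degree simp del: Vp_Suc)
  have "W (Suc d) = W d + (\<Sum>b\<in>{b::'a poly. b \<noteq> 0 \<and> degree b = d}. w b)"
    unfolding W_def Vp_Suc_split by (subst sum.union_disjoint) (use fin1 fin2 in \<open>auto simp: Vp_iff\<close>)
  also have "(\<Sum>b\<in>{b::'a poly. b \<noteq> 0 \<and> degree b = d}. w b) = (\<Sum>(c,a)\<in>(UNIV - {0}) \<times> monic_deg d. w (smult c a))"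
    unfolding deg_eq_image by (subst sum.reindex[OF deg_eq_inj]) (simp add: case_prod_unfold)
  also have "\<dots> = (\<Sum>(c,a)\<in>(UNIV - {0::'a}) \<times> monic_deg d. w a)"
    by (intro sum.cong refl) (auto intro: w_smult)
  also have "\<dots> = (\<Sum>c\<in>UNIV - {0::'a}. S d)"
    unfolding S_def by (subst sum.cartesian_product[symmetric]) simp
  also have "\<dots> = of_nat (CARD('a) - 1) * S d"
    by (simp add: card_Diff_singleton)
  also have "(of_nat (CARD('a) - 1) :: 'a K poly) = - 1"
    using card_ge2[where 'a='a] by (simp add: of_nat_diff q_zero_Kpoly)
  finally show ?thesis by simp
qed

lemma lfac_alt: "lfac d = (\<Prod>j<d. (theta::'a::{finite,field} K) - theta ^ (CARD('a) ^ Suc j))"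
proof (induction d)
  case 0 thus ?case by simp
next
  case (Suc d) thus ?case by (simp only: lfac_Suc prod.lessThan_Suc)
qed

lemma W_formula: "W (Suc d) = smult (- inverse (lfac d)) (M 1 (bpoly d) :: 'a::{finite,field} K poly)"
proof -
  define q where "q = CARD('a)"
  have q2: "q \<ge> 2" using card_ge2[where 'a='a] by (simp add: q_def)
  define A where "A = (\<lambda>k. (theta::'a K) ^ (q ^ k)) ` {..d}"
  have injA: "inj_on (\<lambda>k. (theta::'a K) ^ (q ^ k)) {..d}"
    by (rule inj_onI) (simp add: theta_pow_inj q_pow_inj q_def)
  have cardA: "card A = Suc d" unfolding A_def by (simp add: card_image[OF injA])
  have degW: "degree (W (Suc d) :: 'a K poly) \<le> d"
    unfolding W_def
  proof (rule degree_sum_le)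
    show "finite (Vp (Suc d) - {0} :: 'a poly set)" using Vp_finite by auto
    fix b :: "'a poly" assume "b \<in> Vp (Suc d) - {0}"
    hence "degree b \<le> d" by (simp add: Vp_Suc_degree del: Vp_Suc)
    thus "degree (w b) \<le> d" unfolding w_def
      using degree_at_t[of b] degree_smult_le[of "inverse (to_fract b)" "at_t b"] by linarith
  qed
  have degR: "degree (smult (- inverse (lfac d)) (M 1 (bpoly d) :: 'a K poly)) \<le> d"
  proof -
    have "degree (M 1 (bpoly d) :: 'a K poly) \<le> d"
      unfolding M_bpoly by (rule order.trans[OF degree_prod_sum_le]) simp_all
    thus ?thesis using degree_smult_le order.trans by blast
  qed
  define VK where "VK = to_fract ` (Vp (Suc d) :: 'a poly set)"
  define VK0 where "VK0 = to_fract ` (Vp (Suc d) - {0} :: 'a poly set)"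
  have z0: "(0::'a K) \<in> to_fract ` (Vp (Suc d) :: 'a poly set)"
    using Vp_zero[of "Suc d", where 'a='a] by (intro rev_image_eqI[of 0]) auto
  have VKi: "VK = insert 0 VK0" "0 \<notin> VK0" unfolding VK_def VK0_def using z0 by auto
  have finVK0: "finite VK0" unfolding VK0_def using Vp_finite by auto
  have cardVK: "card VK = q ^ Suc d" unfolding VK_def q_def
    by (subst card_image) (auto simp: inj_on_def card_Vp)
  have psum: "(\<Sum>r\<in>VK0. r ^ (q ^ k - 1)) = - (0 ^ (q ^ k - 1))" if k: "k \<le> d" for k
  proof -
    have "(\<Sum>r\<in>VK. r ^ (q ^ k - 1)) = 0"
    proof (rule power_sum_zero)
      show "finite VK" unfolding VK_def using Vp_finite by auto
      show "0 \<in> VK" unfolding VK_def using Vp_zero by force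
      show "x - y \<in> VK" if "x \<in> VK" "y \<in> VK" for x y
        using that unfolding VK_def by (auto simp flip: to_fract_diff intro: Vp_diff)
      have "q ^ k < q ^ Suc d" using q2 k by (intro power_strict_increasing) auto
      moreover have "q ^ k \<ge> 1" using q2 by simp
      ultimately show "q ^ k - 1 + 1 < card VK" using cardVK by simp
    qed
    thus ?thesis unfolding VKi(1) using finVK0 VKi(2) by (simp add: eq_neg_iff_add_eq_0 add.commute)
  qed
  have "W (Suc d) = smult (- inverse (lfac d)) (M 1 (bpoly d) :: 'a K poly)"
  proof (rule poly_eqI_degree[of A])
    fix x assume "x \<in> A"
    then obtain k where k: "k \<le> d" and x: "x = theta ^ (q ^ k)" unfolding A_def by auto
    have "poly (W (Suc d)) x = (\<Sum>b\<in>Vp (Suc d) - {0}. inverse (to_fract b) * to_fract b ^ (q ^ k))"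
      unfolding W_def w_def x q_def by (simp add: poly_sum poly_at_t_frob)
    also have "\<dots> = (\<Sum>b\<in>Vp (Suc d) - {0}. to_fract b ^ (q ^ k - 1))"
    proof (intro sum.cong refl)
      fix b :: "'a poly" assume "b \<in> Vp (Suc d) - {0}"
      hence nz: "to_fract b \<noteq> 0" by simp
      have "q ^ k = Suc (q ^ k - 1)" using q2 by simp
      hence "to_fract b ^ (q ^ k) = to_fract b * to_fract b ^ (q ^ k - 1)"
        by (metis power_Suc)
      thus "inverse (to_fract b) * to_fract b ^ (q ^ k) = to_fract b ^ (q ^ k - 1)"
        using nz by (simp add: mult.assoc[symmetric])
    qed
    also have "\<dots> = (\<Sum>r\<in>VK0. r ^ (q ^ k - 1))"
      unfolding VK0_def by (subst sum.reindex) (auto simp: inj_on_def)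
    also have "\<dots> = - (0 ^ (q ^ k - 1))" using psum[OF k] .
    finally have L: "poly (W (Suc d)) x = - (0 ^ (q ^ k - 1))" .
    have R: "poly (smult (- inverse (lfac d)) (M 1 (bpoly d) :: 'a K poly)) x
        = - inverse (lfac d) * (\<Prod>j<d. x - theta ^ (q ^ (1 + j)))"
      unfolding M_bpoly q_def by (simp add: poly_prod)
    show "poly (W (Suc d)) x = poly (smult (- inverse (lfac d)) (M 1 (bpoly d))) x"
    proof (cases "k = 0")
      case True
      hence "x = theta" using x by simp
      hence "(\<Prod>j<d. x - theta ^ (q ^ (1 + j))) = lfac d" by (simp add: lfac_alt q_def)
      thus ?thesis using L R True lfac_nz[of d, where 'a='a] by simp
    next
      case False
      then obtain k' where k': "k = Suc k'" by (cases k) auto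
      have P0: "(\<Prod>j<d. x - theta ^ (q ^ (1 + j))) = 0"
        using k k' x by (intro prod_zero) (auto intro!: bexI[of _ k'])
      have "q ^ k - 1 \<noteq> 0"
      proof -
        have "q ^ k \<ge> q" using k' q2 by (simp add: self_le_power)
        thus ?thesis using q2 by linarith
      qed
      note nz = this
      have "poly (smult (- inverse (lfac d)) (M 1 (bpoly d) :: 'a K poly)) x = - inverse (lfac d) * 0"
        using R P0 by (simp only:)
      moreover have "poly (W (Suc d)) x = 0" using L nz by simp
      ultimately show ?thesis by simp
    qed
  next
    show "degree (W (Suc d) :: 'a K poly) < card A" using degW cardA by simp
    show "degree (smult (- inverse (lfac d)) (M 1 (bpoly d) :: 'a K poly)) < card A" using degR cardA by simp
  qed
  thus ?thesis .
qed

lemma W_Tsum: "W (Suc d) = - (Tsum d :: 'a::{finite,field} K poly)"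
  unfolding W_formula tau_bpoly using lfac_nz[of d, where 'a='a] by (simp add: smult_smult)

lemma S_formula: "S d = smult (inverse (lfac d)) (bpoly d :: 'a::{finite,field} K poly)"
proof -
  have S: "S d = W d - (W (Suc d) :: 'a K poly)" using W_Suc[of d, where 'a='a] by simp
  show ?thesis
  proof (cases d)
    case 0 thus ?thesis using S by (simp add: W_0 W_Tsum Tsum_def)
  next
    case (Suc e) thus ?thesis using S by (simp add: W_Tsum Tsum_def)
  qed
qed

theorem proposition6p1:
  fixes n d :: nat
  assumes "n \<ge> 1"
  shows "(tau ^^ n) (bpoly d :: 'a::{finite,field} poly fract poly)
           = smult (lfac d ^ (CARD('a) ^ (n - 1))) (chain_sum n d)
       \<and> (\<Sum>a\<in>monic_deg d. smult (inverse (to_fract a ^ (CARD('a) ^ n))) (at_t a))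
           = smult ((lfac d :: 'a poly fract) powi (int (CARD('a) ^ (n - 1)) - int (CARD('a) ^ n)))
               (chain_sum n d)"
proof
  have P1: "M n (bpoly d) = smult (lfac d ^ (CARD('a) ^ (n - 1))) (chain_sum n d :: 'a K poly)"
    using part1[OF assms] .
  thus "(tau ^^ n) (bpoly d :: 'a::{finite,field} poly fract poly)
           = smult (lfac d ^ (CARD('a) ^ (n - 1))) (chain_sum n d)"
    by (simp only: tau_pow)
  have "(\<Sum>a\<in>monic_deg d. smult (inverse (to_fract a ^ (CARD('a) ^ n))) (at_t a)) = M n (S d :: 'a K poly)"
    unfolding S_def w_def M_sum M_smult M_at_t
    by (intro sum.cong refl) (simp add: frobn_def power_inverse)
  also have "\<dots> = smult (frobn n (inverse (lfac d))) (M n (bpoly d))"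
    by (simp only: S_formula M_smult)
  also have "\<dots> = smult (inverse (lfac d) ^ (CARD('a) ^ n) * lfac d ^ (CARD('a) ^ (n - 1))) (chain_sum n d)"
    by (simp only: P1 frobn_def smult_smult)
  also have "inverse (lfac d) ^ (CARD('a) ^ n) * lfac d ^ (CARD('a) ^ (n - 1)) =
      (lfac d :: 'a K) powi (int (CARD('a) ^ (n - 1)) - int (CARD('a) ^ n))"
    by (rule inv_pow_combine[OF lfac_nz])
  finally show "(\<Sum>a\<in>monic_deg d. smult (inverse (to_fract a ^ (CARD('a) ^ n))) (at_t a))
           = smult ((lfac d :: 'a poly fract) powi (int (CARD('a) ^ (n - 1)) - int (CARD('a) ^ n)))
               (chain_sum n d)" .
qed


end
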